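(* Let $P>0$ and $0<R<\lim_{\rho\to\infty}I_{\mathcal X}(\rho)$. Consider the problem of minimizing $\Pr\big(\frac1B\sum_b I_{\mathcal X}(p_b(\boldsymbol\gamma)\gamma_b)<R\big)$ over all (possibly randomized, given $\boldsymbol\gamma$) power allocation rules $\mathbf p(\boldsymbol\gamma)\in[0,\infty)^B$ satisfying $\mathbb E\big[\frac1B\sum_b p_b(\boldsymbol\gamma)\big]\le P$. A solution is \[ \mathbf p^{\rm opt}_{\rm lt}(\boldsymbol\gamma)=\begin{cases}\boldsymbol\wp^{\rm opt}(\boldsymbol\gamma)&\text{with probability }\hat w(\boldsymbol\gamma),\\ \mathbf 0&\text{with probability }1-\hat w(\boldsymbol\gamma),\end{cases} \] where $\boldsymbol\wp^{\rm opt}(\boldsymbol\gamma)$ minimizes $\frac1B\sum_b\wp_b$ subject to $\frac1B\sum_b I_{\mathcal X}(\wp_b\gamma_b)\ge R$, $\wp_b\ge0$, and $\hat w$ is a solution of: maximize $\mathbb E[w(\boldsymbol\gamma)]$ over measurable $w$ with $0\le w(\boldsymbol\gamma)\le1$ and $\mathbb E\big[\overline{\boldsymbol\wp^{\rm opt}(\boldsymbol\gamma)}\,w(\boldsymbol\gamma)\big]\le P$.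
   Context: $\overline{\mathbf x}=\frac1B\sum_{b=1}^Bx_b$ denotes the arithmetic mean. $I_{\mathcal X}(\rho)$ is the mutual information (bits) of the AWGN channel with SNR $\rho$ and uniform input on a discrete constellation $\mathcal X$ (coded modulation or BICM). Expectations are with respect to the distribution of the fading vector $\boldsymbol\gamma$ (and the randomization of the scheme). *)

theory Defs
  imports "HOL-Probability.Probability"
begin

text \<open>Complex AWGN channel y = sqrt rho * x + z, z circularly symmetric complex Gaussian
  with unit variance, density exp(-|z|^2)/pi with respect to Lebesgue measure on the complex
  plane. A constellation is a finite set of at least two points with unit average energy,
  so that rho is the SNR; the input is uniform on the constellation.\<close>

definition constellation :: "complex set \<Rightarrow> bool" where
  "constellation X \<longleftrightarrow> finite X \<and> card X \<ge> 2 \<and>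
     (\<Sum>x\<in>X. (cmod x)^2) / real (card X) = 1"

definition gauss_density :: "complex \<Rightarrow> real" where
  "gauss_density z = exp (- ((cmod z)^2)) / pi"

text \<open>Likelihood ratio p(y|x')/p(y|x) evaluated at y = sqrt rho * x + z.\<close>
definition lr :: "real \<Rightarrow> complex \<Rightarrow> complex \<Rightarrow> complex \<Rightarrow> real" where
  "lr \<rho> x x' z = exp ((cmod z)^2 - (cmod (complex_of_real (sqrt \<rho>) * (x - x') + z))^2)"

definition cm_mi :: "complex set \<Rightarrow> real \<Rightarrow> real" where
  "cm_mi X \<rho> = log 2 (real (card X)) - (1 / real (card X)) *
     (\<Sum>x\<in>X. \<integral>z. log 2 (\<Sum>x'\<in>X. lr \<rho> x x' z) * gauss_density z \<partial>lborel)"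

text \<open>BICM mutual information (bits) for a binary labeling lab : X -> {0,1}^m
  (bijective), sum over bit levels of I(C_j ; Y).\<close>
definition labeling :: "complex set \<Rightarrow> nat \<Rightarrow> (complex \<Rightarrow> bool list) \<Rightarrow> bool" where
  "labeling X m lab \<longleftrightarrow> bij_betw lab X {bs. length bs = m}"

definition bicm_mi :: "complex set \<Rightarrow> nat \<Rightarrow> (complex \<Rightarrow> bool list) \<Rightarrow> real \<Rightarrow> real" where
  "bicm_mi X m lab \<rho> = real m - (1 / real (card X)) *
     (\<Sum>j<m. \<Sum>x\<in>X. \<integral>z. log 2 ((\<Sum>x'\<in>X. lr \<rho> x x' z) /
          (\<Sum>x'\<in>{x'\<in>X. lab x' ! j = lab x ! j}. lr \<rho> x x' z)) * gauss_density z \<partial>lborel)"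

definition is_mi_function :: "(real \<Rightarrow> real) \<Rightarrow> bool" where
  "is_mi_function I \<longleftrightarrow> (\<exists>X. constellation X \<and>
     (I = cm_mi X \<or> (\<exists>m lab. labeling X m lab \<and> I = bicm_mi X m lab)))"

text \<open>Arithmetic mean over the B blocks (the block index type 'b has B elements).\<close>
definition avg :: "real ^ 'b::finite \<Rightarrow> real" where
  "avg v = (\<Sum>b\<in>UNIV. v $ b) / real CARD('b)"

definition unif01 :: "real measure" where
  "unif01 = uniform_measure lborel {0..1}"

text \<open>A (possibly randomized) power allocation rule is a jointly measurable map
  p(gamma, u) with u the independent uniform randomization; it is admissible if
  nonnegative and satisfies the average power constraint E[mean p] <= P.\<close>
definition admissible_rule ::
  "(real ^ 'b::finite) measure \<Rightarrow> real \<Rightarrow> (real ^ 'b \<Rightarrow> real \<Rightarrow> real ^ 'b) \<Rightarrow> bool" where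
  "admissible_rule M P p \<longleftrightarrow>
     case_prod p \<in> borel_measurable (M \<Otimes>\<^sub>M unif01) \<and>
     (\<forall>g u b. 0 \<le> p g u $ b) \<and>
     (\<integral>\<^sup>+ \<omega>. ennreal (avg (case_prod p \<omega>)) \<partial>(M \<Otimes>\<^sub>M unif01)) \<le> ennreal P"

definition outage_prob ::
  "(real \<Rightarrow> real) \<Rightarrow> real \<Rightarrow> (real ^ 'b::finite) measure \<Rightarrow> (real ^ 'b \<Rightarrow> real \<Rightarrow> real ^ 'b) \<Rightarrow> real" where
  "outage_prob I R M p = measure (M \<Otimes>\<^sub>M unif01)
     {(g, u) \<in> space (M \<Otimes>\<^sub>M unif01). avg (\<chi> b. I (p g u $ b * g $ b)) < R}"

definition is_min_power_alloc ::
  "(real \<Rightarrow> real) \<Rightarrow> real \<Rightarrow> real ^ 'b::finite \<Rightarrow> real ^ 'b \<Rightarrow> bool" where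
  "is_min_power_alloc I R \<gamma> v \<longleftrightarrow>
     (\<forall>b. 0 \<le> v $ b) \<and> avg (\<chi> b. I (v $ b * \<gamma> $ b)) \<ge> R \<and>
     (\<forall>v'. (\<forall>b. 0 \<le> v' $ b) \<and> avg (\<chi> b. I (v' $ b * \<gamma> $ b)) \<ge> R \<longrightarrow> avg v \<le> avg v')"

definition feasible_weight ::
  "(real ^ 'b::finite) measure \<Rightarrow> real \<Rightarrow> (real ^ 'b \<Rightarrow> real ^ 'b) \<Rightarrow> (real ^ 'b \<Rightarrow> real) \<Rightarrow> bool" where
  "feasible_weight M P wp w \<longleftrightarrow> w \<in> borel_measurable M \<and> (\<forall>g\<in>space M. 0 \<le> w g \<and> w g \<le> 1) \<and>
     (\<integral>\<^sup>+ g. ennreal (avg (wp g) * w g) \<partial>M) \<le> ennreal P"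

end

theory Submission
  imports Defs
begin

lemma lr_meas[measurable]: "case_prod (\<lambda>\<rho> z. lr \<rho> x x' z) \<in> borel_measurable (borel \<Otimes>\<^sub>M (lborel::complex measure))"
  unfolding lr_def by measurable
lemma cm_meas: "cm_mi X \<in> borel_measurable borel"
proof -
  interpret sigma_finite_measure "lborel::complex measure" by (rule sigma_finite_lborel)
  show ?thesis unfolding cm_mi_def gauss_density_def lr_def by measurable
qed
lemma bicm_meas: "bicm_mi X m lab \<in> borel_measurable borel"
proof -
  interpret sigma_finite_measure "lborel::complex measure" by (rule sigma_finite_lborel)
  show ?thesis unfolding bicm_mi_def gauss_density_def lr_def by measurable
qed
lemma I_meas: "is_mi_function I \<Longrightarrow> I \<in> borel_measurable borel"
  unfolding is_mi_function_def using cm_meas bicm_meas by blast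

lemma vnth_meas: "(\<lambda>x::real^'b::finite. x $ b) \<in> borel_measurable borel" by measurable
lemma vnth_meas'[measurable (raw)]: "f \<in> borel_measurable N \<Longrightarrow> (\<lambda>x. f x $ b :: real) \<in> borel_measurable N"
  for f :: "_ \<Rightarrow> real^'b::finite" by (rule measurable_compose[OF _ vnth_meas])

lemma unif_prob: "prob_space unif01"
  unfolding unif01_def by (rule prob_space_uniform_measure) auto
lemma unif_lt: assumes "0 \<le> c" "c \<le> 1" shows "emeasure unif01 {..<c} = ennreal c"
proof -
  have "{0..1::real} \<inter> {..<c} = {0..<c}" using assms by auto
  then show ?thesis unfolding unif01_def using assms by (simp add: divide_ennreal_def)
qed

lemma avg_chi: "avg (\<chi> b. f b :: real^'b::finite) = (\<Sum>b\<in>UNIV. f b) / real CARD('b)"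
  by (simp add: avg_def)
lemma avg_meas[measurable (raw)]: "f \<in> borel_measurable N \<Longrightarrow> (\<lambda>x. avg (f x :: real^'b::finite)) \<in> borel_measurable N"
  unfolding avg_def by (intro borel_measurable_divide borel_measurable_sum measurable_const) (simp_all add: measurable_compose[OF _ vnth_meas])
lemma avg_zero[simp]: "avg (0::real^'b::finite) = 0" by (simp add: avg_def)
lemma avg_nonneg: "(\<And>b. 0 \<le> v $ b) \<Longrightarrow> 0 \<le> avg (v::real^'b::finite)"
  by (simp add: avg_def sum_nonneg)

theorem mainTheorem8:
  fixes I :: "real \<Rightarrow> real"
    and M :: "(real ^ 'b::finite) measure"
    and P R Imax :: real
    and wp :: "real ^ 'b \<Rightarrow> real ^ 'b"
    and w_hat :: "real ^ 'b \<Rightarrow> real"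
  assumes I_mi: "is_mi_function I"
    and I_lim: "(I \<longlongrightarrow> Imax) at_top"
    and P_pos: "P > 0"
    and R_pos: "0 < R" and R_lt: "R < Imax"
    and M_prob: "prob_space M"
    and M_sets: "sets M = sets borel"
    and fading_nonneg: "AE g in M. \<forall>b. 0 \<le> g $ b"
    and wp_meas: "wp \<in> borel_measurable M"
    and wp_nonneg: "\<forall>g b. 0 \<le> wp g $ b"
    and wp_opt: "AE g in M. is_min_power_alloc I R g (wp g)"
    and w_hat_feas: "feasible_weight M P wp w_hat"
    and w_hat_opt: "\<forall>w. feasible_weight M P wp w \<longrightarrow>
                      (\<integral>\<^sup>+ g. ennreal (w g) \<partial>M) \<le> (\<integral>\<^sup>+ g. ennreal (w_hat g) \<partial>M)"
  shows "admissible_rule M P (\<lambda>g u. if u < w_hat g then wp g else 0) \<and>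
         (\<forall>p. admissible_rule M P p \<longrightarrow>
            outage_prob I R M (\<lambda>g u. if u < w_hat g then wp g else 0) \<le> outage_prob I R M p)"
proof -
  interpret M: prob_space M by (rule M_prob)
  interpret U: prob_space unif01 by (rule unif_prob)
  interpret MU: pair_prob_space M unif01 ..
  let ?N = "M \<Otimes>\<^sub>M unif01"
  have Imeas[measurable]: "I \<in> borel_measurable borel" by (rule I_meas[OF I_mi])
  have Mb: "measurable M borel = measurable borel borel" by (rule measurable_cong_sets[OF M_sets refl])
  have compM[measurable]: "(\<lambda>g. g $ b :: real) \<in> borel_measurable M" for b
    by (simp add: Mb)
  have whm[measurable]: "w_hat \<in> borel_measurable M" and wh01: "\<And>g. g \<in> space M \<Longrightarrow> 0 \<le> w_hat g \<and> w_hat g \<le> 1"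
    and whP: "(\<integral>\<^sup>+ g. ennreal (avg (wp g) * w_hat g) \<partial>M) \<le> ennreal P"
    using w_hat_feas unfolding feasible_weight_def by auto
  note wp_meas[measurable]
  have spU[simp]: "space unif01 = UNIV" by (simp add: unif01_def)
  define q where "q = (\<lambda>g u. if u < w_hat g then wp g else 0)"
  define G where "G r = {(g,u)\<in>space ?N. R \<le> avg (\<chi> b. I (r g u $ b * g $ b))}" for r :: "real^'b \<Rightarrow> real \<Rightarrow> real^'b"
  have Gsets: "G r \<in> sets ?N" if rm: "case_prod r \<in> borel_measurable ?N" for r
  proof -
    note rm[measurable]
    have "G r = {x\<in>space ?N. R \<le> (\<Sum>b\<in>UNIV. I (case_prod r x $ b * fst x $ b)) / real CARD('b)}"
      unfolding G_def avg_chi by auto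
    also have "\<dots> \<in> sets ?N" by measurable
    finally show ?thesis .
  qed
  have outage: "outage_prob I R M r = 1 - measure ?N (G r)" if rm: "case_prod r \<in> borel_measurable ?N" for r
  proof -
    have "{(g, u) \<in> space ?N. avg (\<chi> b. I (r g u $ b * g $ b)) < R} = space ?N - G r"
      unfolding G_def by auto
    then show ?thesis unfolding outage_prob_def using MU.prob_compl[OF Gsets[OF rm]] by simp
  qed
  have t1: "(\<lambda>w. w_hat (fst w)) \<in> borel_measurable ?N" by measurable
  have sU: "sets unif01 = sets borel" by (simp add: unif01_def)
  have t3[measurable]: "(\<lambda>x. snd x :: real) \<in> borel_measurable ?N"
    using measurable_snd[of M unif01] measurable_cong_sets[OF refl sU, of ?N] by simp
  have qm[measurable]: "case_prod q \<in> borel_measurable ?N"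
  proof -
    have "case_prod q = (\<lambda>x. if snd x < w_hat (fst x) then wp (fst x) else 0)"
      by (auto simp: q_def)
    also have "\<dots> \<in> borel_measurable ?N" by measurable
    finally show ?thesis .
  qed
  have adm: "admissible_rule M P q"
    unfolding admissible_rule_def
  proof (intro conjI qm)
    show "\<forall>g u b. 0 \<le> q g u $ b" using wp_nonneg by (simp add: q_def)
    have "(\<integral>\<^sup>+ \<omega>. ennreal (avg (case_prod q \<omega>)) \<partial>?N) = (\<integral>\<^sup>+ g. \<integral>\<^sup>+ u. ennreal (avg (q g u)) \<partial>unif01 \<partial>M)"
      by (subst U.nn_integral_fst[symmetric]) auto
    also have "\<dots> = (\<integral>\<^sup>+ g. ennreal (avg (wp g) * w_hat g) \<partial>M)"
    proof (rule nn_integral_cong)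
      fix g assume g: "g \<in> space M"
      have "(\<integral>\<^sup>+ u. ennreal (avg (q g u)) \<partial>unif01) = (\<integral>\<^sup>+ u. ennreal (avg (wp g)) * indicator {..<w_hat g} u \<partial>unif01)"
        by (rule nn_integral_cong) (auto simp: q_def indicator_def)
      also have "\<dots> = ennreal (avg (wp g)) * emeasure unif01 {..<w_hat g}"
        by (rule nn_integral_cmult_indicator) (simp add: unif01_def)
      also have "\<dots> = ennreal (avg (wp g) * w_hat g)"
        using wh01[OF g] avg_nonneg[of "wp g"] wp_nonneg by (simp add: unif_lt ennreal_mult)
      finally show "(\<integral>\<^sup>+ u. ennreal (avg (q g u)) \<partial>unif01) = ennreal (avg (wp g) * w_hat g)" .
    qed
    finally show "(\<integral>\<^sup>+ \<omega>. ennreal (avg (case_prod q \<omega>)) \<partial>?N) \<le> ennreal P" using whP by simp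
  qed
  have Gq: "emeasure ?N (G q) \<ge> (\<integral>\<^sup>+ g. ennreal (w_hat g) \<partial>M)"
  proof -
    have "(\<integral>\<^sup>+ g. ennreal (w_hat g) \<partial>M) = (\<integral>\<^sup>+ g. \<integral>\<^sup>+ u. indicator {..<w_hat g} u \<partial>unif01 \<partial>M)"
    proof (rule nn_integral_cong)
      fix g assume g: "g \<in> space M"
      show "ennreal (w_hat g) = (\<integral>\<^sup>+ u. indicator {..<w_hat g} u \<partial>unif01)"
        using wh01[OF g] by (subst nn_integral_indicator) (simp add: unif01_def, simp add: unif_lt)
    qed
    also have "\<dots> \<le> (\<integral>\<^sup>+ g. \<integral>\<^sup>+ u. indicator (G q) (g, u) \<partial>unif01 \<partial>M)"
    proof (rule nn_integral_mono_AE)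
      show "AE g in M. (\<integral>\<^sup>+ u. indicator {..<w_hat g} u \<partial>unif01) \<le> (\<integral>\<^sup>+ u. indicator (G q) (g, u) \<partial>unif01)"
        using wp_opt AE_space
      proof eventually_elim
        case (elim g)
        show ?case
        proof (rule nn_integral_mono)
          fix u assume "u \<in> space unif01"
          show "indicator {..<w_hat g} u \<le> (indicator (G q) (g, u) :: ennreal)"
          proof (cases "u < w_hat g")
            case True
            have "(g, u) \<in> G q"
              using True elim unfolding G_def q_def is_min_power_alloc_def by (auto simp: space_pair_measure)
            then show ?thesis by (simp add: indicator_def)
          qed simp
        qed
      qed
    qed
    also have "\<dots> = emeasure ?N (G q)"
      using Gsets[OF qm] by (subst U.nn_integral_fst) auto
    finally show ?thesis .
  qed
  have Gp: "emeasure ?N (G p) \<le> (\<integral>\<^sup>+ g. ennreal (w_hat g) \<partial>M)" if pa: "admissible_rule M P p" for p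
  proof -
    have pm[measurable]: "case_prod p \<in> borel_measurable ?N"
      and pn: "\<And>g u b. 0 \<le> p g u $ b"
      and pP: "(\<integral>\<^sup>+ \<omega>. ennreal (avg (case_prod p \<omega>)) \<partial>?N) \<le> ennreal P"
      using pa unfolding admissible_rule_def by auto
    have GS[measurable]: "G p \<in> sets ?N" by (rule Gsets[OF pm])
    define f where "f g = (\<integral>\<^sup>+ u. indicator (G p) (g, u) \<partial>unif01)" for g
    have fm[measurable]: "f \<in> borel_measurable M"
      unfolding f_def by measurable
    have f1: "f g \<le> 1" for g
    proof -
      have "f g \<le> (\<integral>\<^sup>+ u. 1 \<partial>unif01)"
        unfolding f_def by (rule nn_integral_mono) (simp add: indicator_def)
      then show ?thesis using U.emeasure_space_1 by simp
    qed
    define w where "w g = enn2real (f g)" for g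
    have fw: "ennreal (w g) = f g" for g
      unfolding w_def using f1[of g] by (metis ennreal_1 ennreal_less_top le_less_trans ennreal_enn2real)
    have umeas: "(\<lambda>u. indicator (G p) (g, u) :: ennreal) \<in> borel_measurable unif01" if "g \<in> space M" for g
      by (rule measurable_Pair2[OF borel_measurable_indicator[OF GS] that])
    have feas: "feasible_weight M P wp w"
      unfolding feasible_weight_def
    proof (intro conjI ballI)
      show "w \<in> borel_measurable M" unfolding w_def by measurable
      fix g assume "g \<in> space M"
      show "0 \<le> w g" unfolding w_def by simp
      show "w g \<le> 1" unfolding w_def using f1[of g] by (intro enn2real_leI) auto
    next
      have "(\<integral>\<^sup>+ g. ennreal (avg (wp g) * w g) \<partial>M) \<le> (\<integral>\<^sup>+ g. \<integral>\<^sup>+ u. ennreal (avg (p g u)) \<partial>unif01 \<partial>M)"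
      proof (rule nn_integral_mono_AE)
        show "AE g in M. ennreal (avg (wp g) * w g) \<le> (\<integral>\<^sup>+ u. ennreal (avg (p g u)) \<partial>unif01)"
          using wp_opt AE_space
        proof eventually_elim
          case (elim g)
          have a0: "0 \<le> avg (wp g)" using wp_nonneg by (intro avg_nonneg) auto
          have "ennreal (avg (wp g) * w g) = ennreal (avg (wp g)) * f g"
            using a0 ennreal_mult[OF a0, of "w g"] fw[of g] by (simp add: w_def)
          also have "\<dots> = (\<integral>\<^sup>+ u. ennreal (avg (wp g)) * indicator (G p) (g, u) \<partial>unif01)"
            unfolding f_def using umeas[OF elim(2)] by (rule nn_integral_cmult[symmetric])
          also have "\<dots> \<le> (\<integral>\<^sup>+ u. ennreal (avg (p g u)) \<partial>unif01)"
          proof (rule nn_integral_mono)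
            fix u assume "u \<in> space unif01"
            show "ennreal (avg (wp g)) * indicator (G p) (g, u) \<le> ennreal (avg (p g u))"
            proof (cases "(g, u) \<in> G p")
              case True
              then have "R \<le> avg (\<chi> b. I (p g u $ b * g $ b))" unfolding G_def by auto
              then have "avg (wp g) \<le> avg (p g u)"
                using elim(1) pn unfolding is_min_power_alloc_def by blast
              then show ?thesis using True by (simp add: ennreal_leI)
            qed simp
          qed
          finally show ?case .
        qed
      qed
      also have "\<dots> = (\<integral>\<^sup>+ \<omega>. ennreal (avg (case_prod p \<omega>)) \<partial>?N)"
        by (subst U.nn_integral_fst[symmetric]) auto
      also have "\<dots> \<le> ennreal P" by (rule pP)
      finally show "(\<integral>\<^sup>+ g. ennreal (avg (wp g) * w g) \<partial>M) \<le> ennreal P" .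
    qed
    have "emeasure ?N (G p) = (\<integral>\<^sup>+ g. f g \<partial>M)"
      unfolding f_def by (subst U.nn_integral_fst) auto
    also have "\<dots> = (\<integral>\<^sup>+ g. ennreal (w g) \<partial>M)" by (simp add: fw)
    also have "\<dots> \<le> (\<integral>\<^sup>+ g. ennreal (w_hat g) \<partial>M)" using w_hat_opt feas by blast
    finally show ?thesis .
  qed
  show ?thesis
  proof (intro conjI allI impI)
    show "admissible_rule M P (\<lambda>g u. if u < w_hat g then wp g else 0)" using adm by (simp add: q_def)
    fix p assume pa: "admissible_rule M P p"
    have pm: "case_prod p \<in> borel_measurable ?N" using pa unfolding admissible_rule_def by auto
    have "emeasure ?N (G p) \<le> emeasure ?N (G q)" using Gp[OF pa] Gq by simp
    then have "measure ?N (G p) \<le> measure ?N (G q)"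
      by (simp add: MU.emeasure_eq_measure)
    then have "outage_prob I R M q \<le> outage_prob I R M p"
      using outage[OF qm] outage[OF pm] by simp
    then show "outage_prob I R M (\<lambda>g u. if u < w_hat g then wp g else 0) \<le> outage_prob I R M p"
      by (simp add: q_def)
  qed
qed
end
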